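(* If $G$ is a finite directed acyclic graph with at least one edge, then \[\tilde{\chi}(\mathrm{DT}(G))=-\prod_{v\in V(G)\setminus R}(1-d^-(v)),\] where $R$ is the set of vertices of $G$ without edges directed to them.
   Context: A directed acyclic graph has no directed cycles. A directed forest is a set of edges which, as a graph, is acyclic with at most one edge directed to each vertex. $\mathrm{DT}(G)$ is the simplicial complex with vertex set $E(G)$ whose simplices are the directed forests. $d^-(v)$ denotes the number of edges of $G$ directed to $v$, and $\tilde\chi$ is the reduced Euler characteristic. *)

theory Defs
  imports "Graph_Theory.Digraph"
begin

text \<open>A digraph is acyclic (a DAG) if it has no directed cycle, i.e. the
  transitive closure of its arc relation is irreflexive (loops are cycles).\<close>
definition dag :: "('a,'b) pre_digraph \<Rightarrow> bool" where
  "dag G \<longleftrightarrow> acyclic (arcs_ends G)"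

definition directed_forest :: "('a,'b) pre_digraph \<Rightarrow> 'b set \<Rightarrow> bool" where
  "directed_forest G F \<longleftrightarrow> F \<subseteq> arcs G \<and> acyclic (arc_to_ends G ` F)
     \<and> (\<forall>v. card {e \<in> F. head G e = v} \<le> 1)"

definition DT :: "('a,'b) pre_digraph \<Rightarrow> 'b set set" where
  "DT G = {F. directed_forest G F}"

text \<open>Reduced Euler characteristic of a finite simplicial complex given as its set of
  faces (including the empty face): sum over faces F of (-1)^(dim F) = (-1)^(|F|-1).\<close>
definition reduced_euler_char :: "'b set set \<Rightarrow> int" where
  "reduced_euler_char K = (\<Sum>F\<in>K. - ((-1) ^ card F))"

end

theory Submission
  imports Defs
begin

lemma key_sum:
  fixes h :: "'b \<Rightarrow> 'a"
  assumes "finite A"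
  shows "(\<Sum>F\<in>{F. F \<subseteq> A \<and> (\<forall>v. card {e\<in>F. h e = v} \<le> 1)}. (-1::int) ^ card F)
         = (\<Prod>v\<in>h ` A. 1 - int (card {e\<in>A. h e = v}))"
  using assms
proof (induction "card A" arbitrary: A rule: less_induct)
  case less
  define FS where "FS = (\<lambda>B. {F. F \<subseteq> B \<and> (\<forall>v. card {e\<in>F. h e = v} \<le> (1::nat))})"
  show ?case
  proof (cases "A = {}")
    case True
    have "FS A = {{}}" unfolding FS_def using True by auto
    then show ?thesis using True unfolding FS_def by simp
  next
    case False
    then obtain a where a: "a \<in> A" by blast
    define v where "v = h a"
    define A0 where "A0 = {e\<in>A. h e = v}"
    define A' where "A' = A - A0"
    have fA': "finite A'" using less.prems A'_def by auto
    have fA0: "finite A0" using less.prems A0_def by auto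
    have "a \<in> A0" using a A0_def v_def by auto
    then have "A' \<subset> A" unfolding A'_def A0_def using a by blast
    then have cA': "card A' < card A" using less.prems by (rule psubset_card_mono[rotated])
    have IH: "(\<Sum>F\<in>FS A'. (-1::int) ^ card F) = (\<Prod>w\<in>h ` A'. 1 - int (card {e\<in>A'. h e = w}))"
      using less.hyps[OF cA' fA'] unfolding FS_def by simp
    have finFS: "finite (FS B)" if "finite B" for B
    proof -
      have "FS B \<subseteq> Pow B" unfolding FS_def by blast
      then show ?thesis using that by (simp add: finite_subset)
    qed
    have setEq: "FS A = FS A' \<union> (\<Union>e\<in>A0. insert e ` FS A')"
    proof
      show "FS A \<subseteq> FS A' \<union> (\<Union>e\<in>A0. insert e ` FS A')"
      proof
        fix F assume F: "F \<in> FS A"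
        then have FA: "F \<subseteq> A" and Fc: "\<And>w. card {e\<in>F. h e = w} \<le> 1" unfolding FS_def by auto
        have finF: "finite F" using FA less.prems finite_subset by auto
        have sub: "G \<in> FS A'" if "G \<subseteq> F" "G \<inter> A0 = {}" for G
        proof -
          have "card {e\<in>G. h e = w} \<le> 1" for w
          proof -
            have "card {e\<in>G. h e = w} \<le> card {e\<in>F. h e = w}"
              by (rule card_mono) (use finF that in auto)
            then show ?thesis using Fc[of w] by simp
          qed
          then show ?thesis unfolding FS_def A'_def using that FA by auto
        qed
        show "F \<in> FS A' \<union> (\<Union>e\<in>A0. insert e ` FS A')"
        proof (cases "F \<inter> A0 = {}")
          case True then show ?thesis using sub by auto
        next
          case False
          then obtain e where e: "e \<in> F" "e \<in> A0" by blast
          have eq: "{x\<in>F. h x = v} = F \<inter> A0" using FA A0_def by auto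
          have "card (F \<inter> A0) \<le> 1" using Fc[of v] eq by simp
          then have "F \<inter> A0 = {e}" using e finF
            using card_le_Suc0_iff_eq[of "F \<inter> A0"] by auto
          then have "F - {e} \<in> FS A'" using sub[of "F - {e}"] by blast
          moreover have "F = insert e (F - {e})" using e by auto
          ultimately show ?thesis using e by blast
        qed
      qed
    next
      show "FS A' \<union> (\<Union>e\<in>A0. insert e ` FS A') \<subseteq> FS A"
      proof
        fix F assume "F \<in> FS A' \<union> (\<Union>e\<in>A0. insert e ` FS A')"
        then consider "F \<in> FS A'" | e F' where "e \<in> A0" "F' \<in> FS A'" "F = insert e F'" by blast
        then show "F \<in> FS A"
        proof cases
          case 1 then show ?thesis unfolding FS_def A'_def by auto
        next
          case 2
          have F'A: "F' \<subseteq> A'" and F'c: "\<And>w. card {x\<in>F'. h x = w} \<le> 1" using 2 unfolding FS_def by auto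
          have "card {x\<in>F. h x = w} \<le> 1" for w
          proof (cases "w = v")
            case True
            then have "{x\<in>F. h x = w} = {e}" using 2 F'A A'_def A0_def by auto
            then show ?thesis by simp
          next
            case False
            then have "{x\<in>F. h x = w} = {x\<in>F'. h x = w}" using 2 A0_def by auto
            then show ?thesis using F'c by simp
          qed
          moreover have "F \<subseteq> A" using 2 F'A A'_def A0_def by auto
          ultimately show ?thesis unfolding FS_def by auto
        qed
      qed
    qed
    have notin: "e \<notin> F'" if "e \<in> A0" "F' \<in> FS A'" for e F'
      using that unfolding FS_def A'_def by auto
    have inj: "inj_on (insert e) (FS A')" if "e \<in> A0" for e
      using notin[OF that] unfolding inj_on_def by (metis Diff_insert_absorb)
    have disj1: "FS A' \<inter> (\<Union>e\<in>A0. insert e ` FS A') = {}"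
      using notin by auto
    have S2: "(\<Sum>F\<in>insert e ` FS A'. (-1::int) ^ card F) = - (\<Sum>F\<in>FS A'. (-1::int) ^ card F)"
      if "e \<in> A0" for e
    proof -
      have "(\<Sum>F\<in>insert e ` FS A'. (-1::int) ^ card F) = (\<Sum>F\<in>FS A'. (-1::int) ^ card (insert e F))"
        using sum.reindex[OF inj[OF that]] by simp
      also have "\<dots> = (\<Sum>F\<in>FS A'. - ((-1::int) ^ card F))"
      proof (rule sum.cong[OF refl])
        fix F assume F: "F \<in> FS A'"
        have "finite F" using F fA' unfolding FS_def by (auto simp: finite_subset)
        then show "(-1::int) ^ card (insert e F) = - ((-1) ^ card F)"
          using notin[OF that F] by simp
      qed
      finally show ?thesis by (simp add: sum_negf)
    qed
    have "(\<Sum>F\<in>(\<Union>e\<in>A0. insert e ` FS A'). (-1::int) ^ card F)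
        = (\<Sum>e\<in>A0. \<Sum>F\<in>insert e ` FS A'. (-1::int) ^ card F)"
    proof (rule sum.UNION_disjoint)
      show "finite A0" by fact
      show "\<forall>i\<in>A0. finite (insert i ` FS A')" using finFS[OF fA'] by auto
      show "\<forall>i\<in>A0. \<forall>j\<in>A0. i \<noteq> j \<longrightarrow> insert i ` FS A' \<inter> insert j ` FS A' = {}"
      proof (intro ballI impI)
        fix i j assume ij: "i \<in> A0" "j \<in> A0" "i \<noteq> j"
        show "insert i ` FS A' \<inter> insert j ` FS A' = {}"
        proof (rule ccontr)
          assume "insert i ` FS A' \<inter> insert j ` FS A' \<noteq> {}"
          then obtain F1 F2 where "F1 \<in> FS A'" "F2 \<in> FS A'" "insert i F1 = insert j F2" by blast
          then have "i \<in> F2" using ij by (metis insertCI insertE)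
          then show False using notin ij \<open>F2 \<in> FS A'\<close> by blast
        qed
      qed
    qed
    also have "\<dots> = (\<Sum>e\<in>A0. - (\<Sum>F\<in>FS A'. (-1::int) ^ card F))"
      using S2 by simp
    also have "\<dots> = - int (card A0) * (\<Sum>F\<in>FS A'. (-1::int) ^ card F)" by simp
    finally have U: "(\<Sum>F\<in>(\<Union>e\<in>A0. insert e ` FS A'). (-1::int) ^ card F)
       = - int (card A0) * (\<Sum>F\<in>FS A'. (-1::int) ^ card F)" .
    have fU: "finite (\<Union>e\<in>A0. insert e ` FS A')" using fA0 finFS[OF fA'] by auto
    have LHS: "(\<Sum>F\<in>FS A. (-1::int) ^ card F) = (1 - int (card A0)) * (\<Sum>F\<in>FS A'. (-1::int) ^ card F)"
      unfolding setEq
      by (subst sum.union_disjoint[OF finFS[OF fA'] fU disj1]) (simp add: U algebra_simps)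
    have hA: "h ` A = insert v (h ` A')" using a v_def A'_def A0_def by auto
    have vn: "v \<notin> h ` A'" using A'_def A0_def by auto
    have RHS: "(\<Prod>w\<in>h ` A. 1 - int (card {e\<in>A. h e = w}))
       = (1 - int (card A0)) * (\<Prod>w\<in>h ` A'. 1 - int (card {e\<in>A'. h e = w}))"
    proof -
      have "(\<Prod>w\<in>h ` A. 1 - int (card {e\<in>A. h e = w}))
           = (1 - int (card {e\<in>A. h e = v})) * (\<Prod>w\<in>h ` A'. 1 - int (card {e\<in>A. h e = w}))"
        unfolding hA using vn fA' by simp
      also have "(\<Prod>w\<in>h ` A'. 1 - int (card {e\<in>A. h e = w})) = (\<Prod>w\<in>h ` A'. 1 - int (card {e\<in>A'. h e = w}))"
      proof (rule prod.cong[OF refl])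
        fix w assume "w \<in> h ` A'"
        then have "w \<noteq> v" using vn by auto
        then have "{e\<in>A. h e = w} = {e\<in>A'. h e = w}" using A'_def A0_def by auto
        then show "1 - int (card {e\<in>A. h e = w}) = 1 - int (card {e\<in>A'. h e = w})" by simp
      qed
      finally show ?thesis using A0_def by simp
    qed
    show ?thesis using LHS RHS IH unfolding FS_def by simp
  qed
qed

theorem lemma2p11:
  fixes G :: "('a,'b) pre_digraph"
  assumes "fin_digraph G"
    and "dag G"
    and "arcs G \<noteq> {}"
  shows "reduced_euler_char (DT G) =
    - (\<Prod>v\<in>verts G - {v \<in> verts G. in_degree G v = 0}. (1 - int (in_degree G v)))"
proof -
  interpret fin_digraph G by fact
  have DTeq: "DT G = {F. F \<subseteq> arcs G \<and> (\<forall>v. card {e\<in>F. head G e = v} \<le> 1)}"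
  proof -
    have "acyclic (arc_to_ends G ` F)" if "F \<subseteq> arcs G" for F
      using assms(2) that unfolding dag_def arcs_ends_def
      by (meson acyclic_subset image_mono)
    then show ?thesis unfolding DT_def directed_forest_def by auto
  qed
  have vs: "verts G - {v \<in> verts G. in_degree G v = 0} = head G ` arcs G"
  proof
    show "verts G - {v \<in> verts G. in_degree G v = 0} \<subseteq> head G ` arcs G"
    proof
      fix v assume "v \<in> verts G - {v \<in> verts G. in_degree G v = 0}"
      then have "in_arcs G v \<noteq> {}" unfolding in_degree_def by auto
      then show "v \<in> head G ` arcs G" unfolding in_arcs_def by auto
    qed
    show "head G ` arcs G \<subseteq> verts G - {v \<in> verts G. in_degree G v = 0}"
    proof
      fix v assume "v \<in> head G ` arcs G"
      then obtain e where e: "e \<in> arcs G" "head G e = v" by auto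
      then have "e \<in> in_arcs G v" unfolding in_arcs_def by auto
      then have "in_degree G v \<noteq> 0" unfolding in_degree_def using finite_in_arcs
        by (metis card_0_eq empty_iff)
      then show "v \<in> verts G - {v \<in> verts G. in_degree G v = 0}" using e by auto
    qed
  qed
  have "reduced_euler_char (DT G) = - (\<Sum>F\<in>DT G. (-1::int) ^ card F)"
    unfolding reduced_euler_char_def by (simp add: sum_negf)
  also have "\<dots> = - (\<Prod>v\<in>head G ` arcs G. 1 - int (card {e\<in>arcs G. head G e = v}))"
    unfolding DTeq using key_sum[OF finite_arcs, of "head G"] by simp
  also have "\<dots> = - (\<Prod>v\<in>verts G - {v \<in> verts G. in_degree G v = 0}. (1 - int (in_degree G v)))"
    by (subst vs) (simp add: in_degree_def in_arcs_def)
  finally show ?thesis .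
qed

end
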